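(* Define $\tau:\mathbb N\to\mathbb N$ by $$\tau(n)=\begin{cases}\lfloor\varphi n+1\rfloor, & n\in R_{2,0},\\ \lfloor\varphi n-1\rfloor, & n\in R_{1,0},\\ \lfloor(\varphi-1) n+1\rfloor, & n\in R_{1,1}.\end{cases}$$ Then $\tau$ is an $R_{i,j}$-permutation of $\mathbb N$ (first values $1,2,5,3,7,4,10,13,6,15,\dots$), and its inverse is the $R_{i,j}$-permutation $$\tau^{-1}(n)=\begin{cases}\lfloor\varphi n\rfloor, & n\in R_{2,0}\cup R_{1,1},\\ \lfloor(\varphi-1) n+1\rfloor, & n\in R_{2,1},\\ \lfloor(\varphi-1) n\rfloor, & n\in R_{3,0}.\end{cases}$$
   Context: $\mathbb N=\{1,2,\dots\}$, $\varphi=\frac{1+\sqrt5}{2}$, $F$ the Fibonacci numbers ($F(0)=0,F(1)=F(2)=1$). For $i\in\mathbb Z^{\ge0},j\in\mathbb Z$, $R_{i,j}$ is the range of $n\mapsto F(i+1)\lfloor n\varphi\rfloor+F(i)n-j$, $n\in\mathbb N$. An $R_{i,j}$-permutation is a permutation $\pi$ of $\mathbb N$ defined piecewise on a finite partition of $\mathbb N$ into sets $R_{i,j}$, with $\pi(n)=\lfloor(a\varphi+b)n+c\rfloor$ on each piece for integers $a,b,c$ depending on the piece. *)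

theory Defs
  imports Complex_Main "HOL-Number_Theory.Fib"
begin

definition phi :: real where "phi = (1 + sqrt 5) / 2"

definition R :: "nat \<Rightarrow> int \<Rightarrow> nat set" where
  "R i j = {m. \<exists>n::nat. n \<ge> 1 \<and>
     int m = int (fib (i+1)) * \<lfloor>real n * phi\<rfloor> + int (fib i) * int n - j}"

text \<open>A piece (i, j, a, b, c): on R i j the map is n \<mapsto> floor((a phi + b) n + c).\<close>
definition Rperm_pieces :: "(nat \<times> int \<times> int \<times> int \<times> int) list \<Rightarrow> (nat \<Rightarrow> nat) \<Rightarrow> bool" where
  "Rperm_pieces ps \<pi> \<longleftrightarrow>
     bij_betw \<pi> {1..} {1..} \<and>
     (\<Union>(i,j,a,b,c)\<in>set ps. R i j) = {1..} \<and>
     (\<forall>k<length ps. \<forall>l<length ps. k \<noteq> l \<longrightarrow>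
        (case ps!k of (i,j,_,_,_) \<Rightarrow> R i j) \<inter> (case ps!l of (i,j,_,_,_) \<Rightarrow> R i j) = {}) \<and>
     (\<forall>(i,j,a,b,c)\<in>set ps. \<forall>n\<in>R i j.
        int (\<pi> n) = \<lfloor>(of_int a * phi + of_int b) * real n + of_int c\<rfloor>)"

definition Rperm :: "(nat \<Rightarrow> nat) \<Rightarrow> bool" where
  "Rperm \<pi> \<longleftrightarrow> (\<exists>ps. Rperm_pieces ps \<pi>)"

definition tau :: "nat \<Rightarrow> nat" where
  "tau n = (if n \<in> R 2 0 then nat \<lfloor>phi * real n + 1\<rfloor>
            else if n \<in> R 1 0 then nat \<lfloor>phi * real n - 1\<rfloor>
            else if n \<in> R 1 1 then nat \<lfloor>(phi - 1) * real n + 1\<rfloor>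
            else 0)"

definition tau_inv :: "nat \<Rightarrow> nat" where
  "tau_inv n = (if n \<in> R 2 0 \<union> R 1 1 then nat \<lfloor>phi * real n\<rfloor>
            else if n \<in> R 2 1 then nat \<lfloor>(phi - 1) * real n + 1\<rfloor>
            else if n \<in> R 3 0 then nat \<lfloor>(phi - 1) * real n\<rfloor>
            else 0)"

end

theory Submission
  imports Defs "HOL-Computational_Algebra.Primes"
begin


lemma sqrt5_irr: "sqrt (real (5::nat)) \<notin> \<rat>"
proof
  have s5: "{2..<5::nat} = {2,3,4}" by auto
  have p5: "prime (5::nat)" unfolding prime_nat_iff' s5 by simp
  assume "sqrt (real (5::nat)) \<in> \<rat>"
  then obtain m n :: nat
    where n: "n \<noteq> 0"
      and sqrt_rat: "\<bar>sqrt (real (5::nat))\<bar> = m / n"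
      and "coprime m n" by (rule Rats_abs_nat_div_natE)
  have eq: "m\<^sup>2 = 5 * n\<^sup>2"
  proof -
    from n and sqrt_rat have "m = \<bar>sqrt (real (5::nat))\<bar> * n" by simp
    then have "real (m\<^sup>2) = (sqrt 5)\<^sup>2 * (real n)\<^sup>2" by (simp add: power_mult_distrib)
    also have "(sqrt 5)\<^sup>2 = (5::real)" by simp
    finally have "real (m\<^sup>2) = real (5 * n\<^sup>2)" by simp
    then show ?thesis by (simp only: of_nat_eq_iff)
  qed
  have "5 dvd m \<and> 5 dvd n"
  proof
    from eq have "5 dvd m\<^sup>2" by simp
    with p5 show "5 dvd m" using prime_dvd_power by blast
    then obtain k where "m = 5 * k" ..
    with eq have "5 * n\<^sup>2 = 5\<^sup>2 * k\<^sup>2" by algebra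
    then have "n\<^sup>2 = 5 * k\<^sup>2" by (simp add: power2_eq_square)
    then have "5 dvd n\<^sup>2" by simp
    with p5 show "5 dvd n" using prime_dvd_power by blast
  qed
  then have "5 dvd gcd m n" by simp
  with \<open>coprime m n\<close> show False by simp
qed

lemma phi_sq: "phi * phi = phi + 1"
proof -
  have "sqrt 5 * sqrt 5 = (5::real)" by simp
  then show ?thesis unfolding phi_def by (simp add: field_simps)
qed

lemma sqrt5_bounds: "2.236 < sqrt (5::real)" "sqrt (5::real) < 2.2361"
  by (rule real_less_rsqrt, simp add: power2_eq_square) (rule real_less_lsqrt, simp_all add: power2_eq_square)

lemma phi_bounds: "1.618 < phi" "phi < 1.61805"
  using sqrt5_bounds unfolding phi_def by simp_all

lemma nirr: assumes "n \<ge> 1" shows "real n * phi \<noteq> of_int p"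
proof
  assume h: "real n * phi = of_int p"
  have "sqrt 5 = (2 * of_int p - real n) / real n"
    using h assms unfolding phi_def by (simp add: field_simps)
  also have "\<dots> \<in> \<rat>" by (intro Rats_divide Rats_diff Rats_mult) auto
  finally show False using sqrt5_irr by simp
qed

definition A :: "nat \<Rightarrow> nat" where "A n = nat \<lfloor>real n * phi\<rfloor>"
definition B :: "nat \<Rightarrow> nat" where "B n = A n + n"

lemma phi_pos: "phi > 1" using phi_bounds by simp

lemma A_int: "int (A n) = \<lfloor>real n * phi\<rfloor>"
  unfolding A_def using phi_pos by simp

lemma A_int': "\<lfloor>phi * real n\<rfloor> = int (A n)"
  using A_int[of n] by (simp add: mult.commute)

lemma A_frac: assumes "n \<ge> 1"
  shows "real (A n) < real n * phi" "real n * phi < real (A n) + 1"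
proof -
  have "real_of_int \<lfloor>real n * phi\<rfloor> \<le> real n * phi" by (rule of_int_floor_le)
  moreover have "real_of_int \<lfloor>real n * phi\<rfloor> \<noteq> real n * phi" using nirr[OF assms] by metis
  ultimately show "real (A n) < real n * phi" using A_int[of n]
    by (metis of_int_of_nat_eq order_le_neq_trans)
  show "real n * phi < real (A n) + 1" using A_int[of n]
    by (metis floor_correct of_int_of_nat_eq of_nat_1 of_nat_add)
qed

lemma A_char: assumes "j \<ge> 1" shows "A j = m \<longleftrightarrow> real m < real j * phi \<and> real j * phi < real m + 1"
proof
  assume "A j = m" then show "real m < real j * phi \<and> real j * phi < real m + 1" using A_frac[OF assms] by auto
next
  assume h: "real m < real j * phi \<and> real j * phi < real m + 1"
  have "\<lfloor>real j * phi\<rfloor> = int m" by (rule floor_unique) (use h in auto)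
  then show "A j = m" using A_int[of j] by simp
qed

lemma B_char: assumes "k \<ge> 1" shows "B k = m \<longleftrightarrow> real m < real k * (phi + 1) \<and> real k * (phi + 1) < real m + 1"
proof
  assume "B k = m" then show "real m < real k * (phi + 1) \<and> real k * (phi + 1) < real m + 1"
    using A_frac[OF assms] unfolding B_def by (auto simp: algebra_simps)
next
  assume h: "real m < real k * (phi + 1) \<and> real k * (phi + 1) < real m + 1"
  have "\<lfloor>real k * phi\<rfloor> = int m - int k" by (rule floor_unique) (use h in \<open>auto simp: algebra_simps\<close>)
  moreover have "0 \<le> \<lfloor>real k * phi\<rfloor>" using phi_pos by simp
  ultimately have "int m \<ge> int k" by linarith
  then show "B k = m" using A_int[of k] \<open>\<lfloor>real k * phi\<rfloor> = int m - int k\<close> unfolding B_def by simp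
qed

lemma A_ge: "A n \<ge> n"
proof -
  have "real n \<le> real n * phi" using mult_left_mono[of 1 phi "real n"] phi_pos by simp
  then have "\<lfloor>real n\<rfloor> \<le> \<lfloor>real n * phi\<rfloor>" by (rule floor_mono)
  then show ?thesis using A_int[of n] by simp
qed

lemma A_Suc: "A (Suc n) > A n"
proof -
  have "real n * phi + 1 \<le> real (Suc n) * phi" using phi_pos by (simp add: algebra_simps)
  then have "\<lfloor>real n * phi + 1\<rfloor> \<le> \<lfloor>real (Suc n) * phi\<rfloor>" by (rule floor_mono)
  then show ?thesis using A_int[of n] A_int[of "Suc n"] by simp
qed

lemma A_smono: "strict_mono A" using A_Suc strict_mono_Suc_iff by blast
lemma B_smono: "strict_mono B"
proof (rule strict_mono_Suc_iff[THEN iffD2], intro allI)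
  fix n show "B n < B (Suc n)" using A_Suc[of n] unfolding B_def by simp
qed
lemma A_inj: "inj A" using A_smono strict_mono_imp_inj_on by blast
lemma B_inj: "inj B" using B_smono strict_mono_imp_inj_on by blast

lemma AA: assumes "m \<ge> 1" shows "A (A m) = A m + m - 1"
proof -
  define f where "f = real m * phi - real (A m)"
  have f: "0 < f" "f < 1" using A_frac[OF assms] f_def by auto
  have e: "real (A m) * phi = real (A m) + real m - f * (phi - 1)"
  proof -
    have "real (A m) * phi = (real m * phi - f) * phi" by (simp add: f_def)
    also have "\<dots> = real m * (phi * phi) - f * phi" by (simp add: algebra_simps)
    also have "\<dots> = real (A m) + real m - f * (phi - 1)" by (simp add: phi_sq f_def algebra_simps)
    finally show ?thesis .
  qed
  have b1: "0 < f * (phi - 1)" using f phi_pos by simp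
  have b2: "f * (phi - 1) < 1"
  proof -
    have "f * (phi - 1) \<le> f * 1" using f phi_bounds by (intro mult_left_mono) auto
    then show ?thesis using f by linarith
  qed
  have "\<lfloor>real (A m) * phi\<rfloor> = int (A m) + int m - 1"
    by (rule floor_unique) (use e b1 b2 in auto)
  then show ?thesis using A_int[of "A m"] A_ge[of m] assms by simp
qed

lemma AB: "A (B m) = 2 * A m + m"
proof (cases "m = 0")
  case True then show ?thesis by (simp add: A_def B_def)
next
  case False
  then have assms: "m \<ge> 1" by simp
  define f where "f = real m * phi - real (A m)"
  have f: "0 < f" "f < 1" using A_frac[OF assms] f_def by auto
  have e: "real (B m) * phi = 2 * real (A m) + real m + f * (2 - phi)"
  proof -
    have "real (B m) * phi = (real m * phi - f) * phi + real m * phi" by (simp add: f_def B_def algebra_simps)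
    also have "\<dots> = real m * (phi * phi) - f * phi + real m * phi" by (simp add: algebra_simps)
    also have "\<dots> = 2 * real (A m) + real m + f * (2 - phi)" by (simp add: phi_sq f_def algebra_simps)
    finally show ?thesis .
  qed
  have b1: "0 < f * (2 - phi)" using f phi_bounds by simp
  have b2: "f * (2 - phi) < 1"
  proof -
    have "f * (2 - phi) \<le> f * 1" using f phi_bounds by (intro mult_left_mono) auto
    then show ?thesis using f by linarith
  qed
  have "\<lfloor>real (B m) * phi\<rfloor> = 2 * int (A m) + int m"
    by (rule floor_unique) (use e b1 b2 in auto)
  then show ?thesis using A_int[of "B m"] by simp
qed



lemma phi_m1: "real j * phi * (phi - 1) = real j"
proof -
  have "real j * phi * (phi - 1) = real j * (phi * phi - phi)" by (simp add: algebra_simps)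
  then show ?thesis by (simp add: phi_sq)
qed
lemma phi_p1: "real j * (phi + 1) * (2 - phi) = real j"
proof -
  have "real j * (phi + 1) * (2 - phi) = real j * (phi + 2 - phi * phi)" by (simp add: algebra_simps)
  then show ?thesis by (simp add: phi_sq)
qed

lemma AB_disj: assumes "j \<ge> 1" "k \<ge> 1" shows "A j \<noteq> B k"
proof
  assume h: "A j = B k"
  define m where "m = A j"
  have a: "real m < real j * phi" "real j * phi < real m + 1" using A_char[OF assms(1)] m_def by auto
  have b: "real m < real k * (phi + 1)" "real k * (phi + 1) < real m + 1" using B_char[OF assms(2)] m_def h by auto
  have p1: "phi - 1 > 0" "2 - phi > 0" using phi_bounds by auto
  have "real m * (phi - 1) < real j" using mult_strict_right_mono[OF a(1) p1(1)] phi_m1 by simp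
  moreover have "real j < (real m + 1) * (phi - 1)" using mult_strict_right_mono[OF a(2) p1(1)] phi_m1 by simp
  moreover have "real m * (2 - phi) < real k" using mult_strict_right_mono[OF b(1) p1(2)] phi_p1 by simp
  moreover have "real k < (real m + 1) * (2 - phi)" using mult_strict_right_mono[OF b(2) p1(2)] phi_p1 by simp
  ultimately have "real m < real (j + k)" "real (j + k) < real (m + 1)" by (simp_all add: algebra_simps)
  then have "m < j + k" "j + k < m + 1" by (simp_all only: of_nat_less_iff)
  then show False by simp
qed

lemma AB_cover: assumes "m \<ge> 1" shows "(\<exists>j\<ge>1. A j = m) \<or> (\<exists>k\<ge>1. B k = m)"
proof -
  define x where "x = real m * (phi - 1)"
  define y where "y = real m * (2 - phi)"
  have xy: "x + y = real m" by (simp add: x_def y_def algebra_simps)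
  have p1: "phi - 1 > 0" "2 - phi > 0" using phi_bounds by auto
  have x0: "x \<ge> 0" "y \<ge> 0" using p1 by (simp_all add: x_def y_def)
  define j where "j = nat \<lfloor>x\<rfloor>"
  define k where "k = nat \<lfloor>y\<rfloor>"
  have jx: "real j \<le> x" "x < real j + 1" using x0 unfolding j_def
    by (simp_all add: of_nat_nat)
  have ky: "real k \<le> y" "y < real k + 1" using x0 unfolding k_def
    by (simp_all add: of_nat_nat)
  have "x \<noteq> real j"
  proof
    assume "x = real j"
    then have "real m * phi = of_int (int j + int m)" by (simp add: x_def algebra_simps)
    then show False using nirr[OF assms] by blast
  qed
  then have jx': "real j < x" using jx by simp
  have "y \<noteq> real k"
  proof
    assume "y = real k"
    then have "real m * phi = of_int (2 * int m - int k)" by (simp add: y_def algebra_simps)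
    then show False using nirr[OF assms] by blast
  qed
  then have ky': "real k < y" using ky by simp
  have "real (j + k) < real m" using jx' ky' xy by simp
  moreover have "real m < real (j + k + 2)" using jx ky xy by simp
  ultimately have "j + k < m" "m < j + k + 2" by (simp_all only: of_nat_less_iff)
  then have jk: "j + k + 1 = m" by simp
  have ne: "real (j + 1) \<noteq> (real m + 1) * (phi - 1)"
  proof
    assume "real (j + 1) = (real m + 1) * (phi - 1)"
    then have eq: "real (m + 1) * phi = of_int (int j + 1 + int m + 1)" by (simp add: algebra_simps)
    have "m + 1 \<ge> 1" by simp
    from nirr[OF this] eq show False by blast
  qed
  show ?thesis
  proof (cases "real (j + 1) < (real m + 1) * (phi - 1)")
    case True
    have "A (j + 1) = m"
    proof -
      have "real m < real (j+1) * phi"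
      proof -
        have "x < real (j+1)" using jx by simp
        moreover have "(0::real) < phi" using phi_pos by simp
        ultimately have "x * phi < real (j+1) * phi" by (rule mult_strict_right_mono)
        moreover have "x * phi = real m" unfolding x_def using phi_m1[of m] by (simp add: algebra_simps)
        ultimately show ?thesis by simp
      qed
      moreover have "real (j+1) * phi < real m + 1"
      proof -
        have "(0::real) < phi" using phi_pos by simp
        with True have "real (j+1) * phi < (real m + 1) * (phi - 1) * phi" by (rule mult_strict_right_mono)
        moreover have "(real m + 1) * (phi - 1) * phi = real m + 1" using phi_m1[of "m+1"] by (simp add: algebra_simps)
        ultimately show ?thesis by simp
      qed
      ultimately show ?thesis using A_char[of "j+1" m] by auto
    qed
    then show ?thesis by (intro disjI1 exI[of _ "j+1"]) simp
  next
    case False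
    then have F: "real (j + 1) > (real m + 1) * (phi - 1)" using ne by simp
    have kk: "real (k + 1) < (real m + 1) * (2 - phi)"
    proof -
      have "real (j + 1) + real (k + 1) = real m + 1" using jk by (metis of_nat_1 of_nat_add add.assoc add.commute)
      then show ?thesis using F by (simp add: algebra_simps)
    qed
    have "B (k + 1) = m"
    proof -
      have "real m < real (k+1) * (phi + 1)"
      proof -
        have "y < real (k+1)" using ky by simp
        moreover have "(0::real) < phi + 1" using phi_pos by simp
        ultimately have "y * (phi + 1) < real (k+1) * (phi + 1)" by (rule mult_strict_right_mono)
        moreover have "y * (phi + 1) = real m * (phi + 1) * (2 - phi)" unfolding y_def by (simp only: mult_ac)
        then have "y * (phi + 1) = real m" using phi_p1[of m] by simp
        ultimately show ?thesis by simp
      qed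
      moreover have "real (k+1) * (phi + 1) < real m + 1"
      proof -
        have "(0::real) < phi + 1" using phi_pos by simp
        with kk have "real (k+1) * (phi + 1) < (real m + 1) * (2 - phi) * (phi + 1)" by (rule mult_strict_right_mono)
        moreover have "(real m + 1) * (2 - phi) * (phi + 1) = real (m + 1) * (phi + 1) * (2 - phi)" by (simp add: mult_ac)
        then have "(real m + 1) * (2 - phi) * (phi + 1) = real m + 1" using phi_p1[of "m+1"] by (simp add: mult_ac)
        ultimately show ?thesis by simp
      qed
      ultimately show ?thesis using B_char[of "k+1" m] by auto
    qed
    then show ?thesis by (intro disjI2 exI[of _ "k+1"]) simp
  qed
qed



abbreviation "SA \<equiv> A ` {1..}"
abbreviation "SB \<equiv> B ` {1..}"

lemma A_pos: "n \<ge> 1 \<Longrightarrow> A n \<ge> 1" using A_ge[of n] by simp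
lemma B_pos: "n \<ge> 1 \<Longrightarrow> B n \<ge> 1" unfolding B_def by simp

lemma SAB_disj: "SA \<inter> SB = {}" using AB_disj by auto
lemma SAB_cover: "SA \<union> SB = {1..}" using AB_cover A_pos B_pos by fastforce

lemma fib_vals: "fib 1 = 1" "fib 2 = 1" "fib 3 = 2" "fib 4 = 3"
  by (simp_all add: numeral_eq_Suc)

lemma R_eq: "R i j = {m. \<exists>n\<ge>1. int m = int (fib (i+1)) * int (A n) + int (fib i) * int n - j}"
  unfolding R_def A_int by simp

lemma img_eq: assumes "\<And>m n. n \<ge> 1 \<Longrightarrow> P m n \<longleftrightarrow> m = g n"
  shows "{m. \<exists>n\<ge>1. P m n} = g ` {1..}"
  using assms by auto

lemma R10: "R 1 0 = SB"
  unfolding R_eq by (rule img_eq) (auto simp: fib_vals B_def)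

lemma R11: "R 1 1 = A ` SA"
proof -
  have "int m = int (A n) + int n - 1 \<longleftrightarrow> m = (A \<circ> A) n" if "n \<ge> 1" for m n
    using AA[OF that] A_ge[of n] that by auto
  then have "R 1 1 = (A \<circ> A) ` {1..}" unfolding R_eq by (intro img_eq) (simp add: fib_vals)
  then show ?thesis by (simp add: image_comp)
qed

lemma R20: "R 2 0 = A ` SB"
proof -
  have "int m = 2 * int (A n) + int n \<longleftrightarrow> m = (A \<circ> B) n" for m n
    using AB[of n] by auto
  then have "R 2 0 = (A \<circ> B) ` {1..}" unfolding R_eq by (intro img_eq) (simp add: fib_vals)
  then show ?thesis by (simp add: image_comp)
qed

lemma R21: "R 2 1 = B ` SA"
proof -
  have "int m = 2 * int (A n) + int n - 1 \<longleftrightarrow> m = (B \<circ> A) n" if "n \<ge> 1" for m n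
    using AA[OF that] A_ge[of n] that unfolding B_def by auto
  then have "R 2 1 = (B \<circ> A) ` {1..}" unfolding R_eq by (intro img_eq) (simp add: fib_vals)
  then show ?thesis by (simp add: image_comp)
qed

lemma R30: "R 3 0 = B ` SB"
proof -
  have "int m = 3 * int (A n) + 2 * int n \<longleftrightarrow> m = (B \<circ> B) n" for m n
    using AB[of n] unfolding B_def by auto
  then have "R 3 0 = (B \<circ> B) ` {1..}" unfolding R_eq by (intro img_eq) (simp add: fib_vals)
  then show ?thesis by (simp add: image_comp)
qed

lemma imgA_disj: "A ` X \<inter> A ` Y = {}" if "X \<inter> Y = {}" using A_inj that by (auto dest: injD)
lemma imgB_disj: "B ` X \<inter> B ` Y = {}" if "X \<inter> Y = {}" using B_inj that by (auto dest: injD)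
lemma imgAB_disj: "A ` X \<inter> B ` Y = {}" if "X \<subseteq> {1..}" "Y \<subseteq> {1..}" using AB_disj that by fastforce

lemma SA_sub: "SA \<subseteq> {1..}" using A_pos by auto
lemma SB_sub: "SB \<subseteq> {1..}" using B_pos by auto

lemma subs: "A ` SA \<subseteq> SA" "A ` SB \<subseteq> SA" "B ` SA \<subseteq> SB" "B ` SB \<subseteq> SB"
  using A_pos B_pos by auto
lemma dA: "A ` SA \<inter> A ` SB = {}" by (rule imgA_disj[OF SAB_disj])
lemma dB: "B ` SA \<inter> B ` SB = {}" by (rule imgB_disj[OF SAB_disj])

lemma fl_phi1: "\<lfloor>phi * real n + 1\<rfloor> = int (A n) + 1"
  using A_int'[of n] by (metis floor_add_int of_int_1)
lemma fl_phim1: "\<lfloor>phi * real n - 1\<rfloor> = int (A n) - 1"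
  using A_int'[of n] by (metis floor_diff_one)
lemma fl_phi_m: "\<lfloor>(phi - 1) * real n\<rfloor> = int (A n) - int n"
proof -
  have "(phi - 1) * real n = phi * real n - of_int (int n)" by (simp add: algebra_simps)
  then have "\<lfloor>(phi - 1) * real n\<rfloor> = \<lfloor>phi * real n\<rfloor> - int n" by (simp only: floor_diff_of_int)
  then show ?thesis using A_int'[of n] by simp
qed
lemma fl_phi_m1: "\<lfloor>(phi - 1) * real n + 1\<rfloor> = int (A n) - int n + 1"
  using fl_phi_m[of n] by (metis floor_add_int of_int_1)

lemma tau_AB: assumes "k \<ge> 1" shows "tau (A (B k)) = B (B k)"
proof -
  have "A (B k) \<in> R 2 0" unfolding R20 using assms by auto
  then have "tau (A (B k)) = nat (int (A (A (B k))) + 1)" unfolding tau_def fl_phi1 by simp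
  also have "\<dots> = B (B k)" using AA[of "B k"] B_pos[OF assms] unfolding B_def[of "B k"] by simp
  finally show ?thesis .
qed

lemma tau_B: assumes "k \<ge> 1" shows "tau (B k) = B (A k)"
proof -
  have "B k \<notin> R 2 0" unfolding R20 using assms imgAB_disj[OF SB_sub SA_sub] SA_sub SB_sub AB_disj B_pos
    by (metis (no_types, lifting) atLeast_iff image_iff)
  moreover have "B k \<in> R 1 0" unfolding R10 using assms by auto
  ultimately have "tau (B k) = nat (int (A (B k)) - 1)" unfolding tau_def fl_phim1 by simp
  also have "\<dots> = B (A k)" using AA[OF assms] AB[of k] A_ge[of k] assms unfolding B_def by simp
  finally show ?thesis .
qed

lemma tau_AA: assumes "k \<ge> 1" shows "tau (A (A k)) = A k"
proof -
  have ak: "A k \<ge> 1" using A_pos[OF assms] .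
  have "A (A k) \<notin> R 2 0" unfolding R20 using assms dA by blast
  moreover have "A (A k) \<notin> R 1 0" unfolding R10 using assms ak AB_disj A_pos by auto
  moreover have "A (A k) \<in> R 1 1" unfolding R11 using assms by auto
  ultimately have "tau (A (A k)) = nat (int (A (A (A k))) - int (A (A k)) + 1)" unfolding tau_def fl_phi_m1 by simp
  also have "\<dots> = A k" using AA[OF ak] AA[OF assms] A_ge[of "A k"] A_ge[of k] ak by simp
  finally show ?thesis .
qed

lemma taui_A: assumes "k \<ge> 1" shows "tau_inv (A k) = A (A k)"
proof -
  have "k \<in> SA \<union> SB" using assms SAB_cover by auto
  then have "A k \<in> R 2 0 \<union> R 1 1" unfolding R20 R11 by blast
  then show ?thesis unfolding tau_def tau_inv_def A_int' by simp
qed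

lemma taui_BA: assumes "k \<ge> 1" shows "tau_inv (B (A k)) = B k"
proof -
  have ak: "A k \<ge> 1" using A_pos[OF assms] .
  have "B (A k) \<notin> R 2 0 \<union> R 1 1" unfolding R20 R11 using ak assms subs SAB_disj by blast
  moreover have "B (A k) \<in> R 2 1" unfolding R21 using assms by auto
  ultimately have "tau_inv (B (A k)) = nat (int (A (B (A k))) - int (B (A k)) + 1)" unfolding tau_inv_def fl_phi_m1 by simp
  also have "\<dots> = B k" using AB[of "A k"] AA[OF assms] A_ge[of k] assms unfolding B_def by simp
  finally show ?thesis .
qed

lemma taui_BB: assumes "k \<ge> 1" shows "tau_inv (B (B k)) = A (B k)"
proof -
  have bk: "B k \<ge> 1" using B_pos[OF assms] .
  have "B (B k) \<notin> R 2 0 \<union> R 1 1" unfolding R20 R11 using bk assms subs SAB_disj by blast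
  moreover have "B (B k) \<notin> R 2 1" unfolding R21 using bk assms dB by blast
  moreover have "B (B k) \<in> R 3 0" unfolding R30 using assms by auto
  ultimately have "tau_inv (B (B k)) = nat (int (A (B (B k))) - int (B (B k)))" unfolding tau_inv_def fl_phi_m by simp
  also have "\<dots> = A (B k)" using AB[of "B k"] unfolding B_def[of "B k"] by simp
  finally show ?thesis .
qed



lemma SA_split: "A ` SA \<union> A ` SB = SA" using SAB_cover by (metis image_Un)
lemma SB_split: "B ` SA \<union> B ` SB = SB" using SAB_cover by (metis image_Un)
lemma AA_sub: "A ` SA \<subseteq> {1..}" "A ` SB \<subseteq> {1..}" "B ` SA \<subseteq> {1..}" "B ` SB \<subseteq> {1..}"
  using A_pos B_pos by auto


lemma tau_cases: assumes "n \<ge> 1"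
  obtains k where "k \<ge> 1" "n = A (B k)" | k where "k \<ge> 1" "n = B k" | k where "k \<ge> 1" "n = A (A k)"
proof -
  have "n \<in> SA \<union> SB" using SAB_cover assms by auto
  then have "n \<in> A ` SA \<union> A ` SB \<union> SB" using SA_split by blast
  then show ?thesis using that by blast
qed

lemma taui_cases: assumes "n \<ge> 1"
  obtains k where "k \<ge> 1" "n = A k" | k where "k \<ge> 1" "n = B (A k)" | k where "k \<ge> 1" "n = B (B k)"
proof -
  have "n \<in> SA \<union> SB" using SAB_cover assms by auto
  then have "n \<in> SA \<union> B ` SA \<union> B ` SB" using SB_split by blast
  then show ?thesis using that by blast
qed

lemma inv1: "n \<ge> 1 \<Longrightarrow> tau_inv (tau n) = n \<and> tau n \<ge> 1"
  apply (erule tau_cases)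
  using tau_AB taui_BB tau_B taui_BA tau_AA taui_A B_pos A_pos by auto

lemma inv2: "n \<ge> 1 \<Longrightarrow> tau (tau_inv n) = n \<and> tau_inv n \<ge> 1"
  apply (erule taui_cases)
  using tau_AB taui_BB tau_B taui_BA tau_AA taui_A B_pos A_pos by auto

lemma tau_bij: "bij_betw tau {1..} {1..}"
  by (rule bij_betw_byWitness[where f'=tau_inv]) (use inv1 inv2 in auto)

lemma taui_bij: "bij_betw tau_inv {1..} {1..}"
  by (rule bij_betw_byWitness[where f'=tau]) (use inv1 inv2 in auto)

lemma pos_of: "n \<in> A ` X \<Longrightarrow> X \<subseteq> {1..} \<Longrightarrow> n \<ge> 1" "n \<in> B ` X \<Longrightarrow> X \<subseteq> {1..} \<Longrightarrow> n \<ge> 1"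
  using A_pos B_pos by auto



lemma tau_p1: "\<forall>n\<in>R 2 0. int (tau n) = \<lfloor>phi * real n + 1\<rfloor>"
  unfolding tau_def fl_phi1 by auto
lemma tau_p2: "\<forall>n\<in>R 1 0. int (tau n) = \<lfloor>phi * real n - 1\<rfloor>"
proof
  fix n assume n: "n \<in> R 1 0"
  then have "n \<notin> R 2 0" unfolding R10 R20 using subs SAB_disj by blast
  moreover have "n \<ge> 1" using n unfolding R10 using B_pos by auto
  ultimately show "int (tau n) = \<lfloor>phi * real n - 1\<rfloor>" using n A_ge[of n] unfolding tau_def fl_phim1 by auto
qed
lemma tau_p3: "\<forall>n\<in>R 1 1. int (tau n) = \<lfloor>(phi - 1) * real n + 1\<rfloor>"
proof
  fix n assume n: "n \<in> R 1 1"
  have h1: "n \<notin> R 2 0" using n unfolding R20 R11 using dA by blast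
  have h2: "n \<notin> R 1 0" using n unfolding R10 R11 using subs SAB_disj by blast
  have "tau n = nat \<lfloor>(phi - 1) * real n + 1\<rfloor>" using h1 h2 n unfolding tau_def by simp
  then show "int (tau n) = \<lfloor>(phi - 1) * real n + 1\<rfloor>" using A_ge[of n] unfolding fl_phi_m1 by simp
qed

lemma R2011: "R 2 0 \<union> R 1 1 = SA" unfolding R20 R11 using SA_split by blast
lemma inSB: "n \<in> SB \<Longrightarrow> n \<notin> R 2 0 \<union> R 1 1" unfolding R2011 using SAB_disj by blast
lemma R21SB: "R 2 1 \<subseteq> SB" "R 3 0 \<subseteq> SB" unfolding R21 R30 using subs by simp_all

lemma taui_p1: "\<forall>n\<in>R 2 0 \<union> R 1 1. int (tau_inv n) = \<lfloor>phi * real n\<rfloor>"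
  unfolding tau_inv_def A_int' by auto
lemma taui_p2: "\<forall>n\<in>R 2 1. int (tau_inv n) = \<lfloor>(phi - 1) * real n + 1\<rfloor>"
proof
  fix n assume n: "n \<in> R 2 1"
  have h1: "n \<notin> R 2 0 \<union> R 1 1" using n R21SB inSB by blast
  have "tau_inv n = nat \<lfloor>(phi - 1) * real n + 1\<rfloor>" using h1 n unfolding tau_inv_def by simp
  then show "int (tau_inv n) = \<lfloor>(phi - 1) * real n + 1\<rfloor>" using A_ge[of n] unfolding fl_phi_m1 by simp
qed
lemma taui_p3: "\<forall>n\<in>R 3 0. int (tau_inv n) = \<lfloor>(phi - 1) * real n\<rfloor>"
proof
  fix n assume n: "n \<in> R 3 0"
  have h1: "n \<notin> R 2 0 \<union> R 1 1" using n R21SB inSB by blast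
  have h2: "n \<notin> R 2 1" using n unfolding R30 R21 using dB by blast
  have "tau_inv n = nat \<lfloor>(phi - 1) * real n\<rfloor>" using h1 h2 n unfolding tau_inv_def by simp
  then show "int (tau_inv n) = \<lfloor>(phi - 1) * real n\<rfloor>" using A_ge[of n] unfolding fl_phi_m by simp
qed

lemma U1: "R 2 0 \<union> (R 1 0 \<union> R 1 1) = {1..}"
proof -
  have "R 2 0 \<union> (R 1 0 \<union> R 1 1) = (R 2 0 \<union> R 1 1) \<union> R 1 0" by blast
  also have "\<dots> = SA \<union> SB" unfolding R2011 R10 ..
  finally show ?thesis using SAB_cover by simp
qed
lemma U2: "R 2 0 \<union> (R 1 1 \<union> (R 2 1 \<union> R 3 0)) = {1..}"
proof -
  have "R 2 0 \<union> (R 1 1 \<union> (R 2 1 \<union> R 3 0)) = (R 2 0 \<union> R 1 1) \<union> (R 2 1 \<union> R 3 0)" by blast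
  also have "\<dots> = SA \<union> SB" unfolding R2011 R21 R30 SB_split ..
  finally show ?thesis using SAB_cover by simp
qed

lemma allS: "(\<forall>k<Suc n. P k) \<longleftrightarrow> (\<forall>k<n. P k) \<and> P n" by (auto simp: less_Suc_eq)
lemma pw4: "(\<forall>k<length [x,y,z,w]. \<forall>l<length [x,y,z,w]. k \<noteq> l \<longrightarrow> Q ([x,y,z,w]!k) ([x,y,z,w]!l)) \<longleftrightarrow>
   Q x y \<and> Q x z \<and> Q x w \<and> Q y x \<and> Q y z \<and> Q y w \<and> Q z x \<and> Q z y \<and> Q z w \<and> Q w x \<and> Q w y \<and> Q w z"
  by (simp add: allS)
lemma pw3: "(\<forall>k<length [x,y,z]. \<forall>l<length [x,y,z]. k \<noteq> l \<longrightarrow> Q ([x,y,z]!k) ([x,y,z]!l)) \<longleftrightarrow>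
   Q x y \<and> Q x z \<and> Q y x \<and> Q y z \<and> Q z x \<and> Q z y"
  by (simp add: allS)

lemma D1: "R 2 0 \<inter> R 1 0 = {}" "R 2 0 \<inter> R 1 1 = {}" "R 1 0 \<inter> R 1 1 = {}"
proof -
  show "R 2 0 \<inter> R 1 0 = {}" unfolding R20 R10 using subs(2) SAB_disj by blast
  show "R 2 0 \<inter> R 1 1 = {}" unfolding R20 R11 using dA by blast
  show "R 1 0 \<inter> R 1 1 = {}" unfolding R10 R11 using subs(1) SAB_disj by blast
qed
lemma D2: "R 2 0 \<inter> R 1 1 = {}" "R 2 0 \<inter> R 2 1 = {}" "R 2 0 \<inter> R 3 0 = {}"
   "R 1 1 \<inter> R 2 1 = {}" "R 1 1 \<inter> R 3 0 = {}" "R 2 1 \<inter> R 3 0 = {}"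
proof -
  have a: "R 2 0 \<subseteq> SA" "R 1 1 \<subseteq> SA" using R2011 by blast+
  show "R 2 0 \<inter> R 1 1 = {}" by (rule D1(2))
  show "R 2 0 \<inter> R 2 1 = {}" using a(1) R21SB(1) SAB_disj by blast
  show "R 2 0 \<inter> R 3 0 = {}" using a(1) R21SB(2) SAB_disj by blast
  show "R 1 1 \<inter> R 2 1 = {}" using a(2) R21SB(1) SAB_disj by blast
  show "R 1 1 \<inter> R 3 0 = {}" using a(2) R21SB(2) SAB_disj by blast
  show "R 2 1 \<inter> R 3 0 = {}" unfolding R21 R30 by (rule dB)
qed

lemma Rperm_tau: "Rperm tau"
  unfolding Rperm_def
  apply (rule exI[where x="[(2,0,1,0,1),(1,0,1,0,-1),(1,1,1,-1,1)]"])
  apply (unfold Rperm_pieces_def)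
  apply (intro conjI)
  subgoal by (rule tau_bij)
  subgoal using U1 by simp
  subgoal apply (rule iffD2[OF pw3]) using D1 by (simp add: Int_commute)
  subgoal using tau_p1 tau_p2 tau_p3 by simp
  done

lemma Rperm_taui: "Rperm tau_inv"
  unfolding Rperm_def
  apply (rule exI[where x="[(2,0,1,0,0),(1,1,1,0,0),(2,1,1,-1,1),(3,0,1,-1,0)]"])
  apply (unfold Rperm_pieces_def)
  apply (intro conjI)
  subgoal by (rule taui_bij)
  subgoal using U2 by simp
  subgoal apply (rule iffD2[OF pw4]) using D2 by (simp add: Int_commute)
  subgoal using taui_p1 taui_p2 taui_p3 by simp
  done


lemma A_vals: "A 1 = 1" "A 2 = 3" "A 3 = 4" "A 4 = 6" "A 5 = 8" "A 6 = 9"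
  by (subst A_char; use phi_bounds in simp)+

lemma B_vals: "B 1 = 2" "B 2 = 5" "B 3 = 7" "B 4 = 10" "B 5 = 13" "B 6 = 15"
  unfolding B_def A_vals by simp_all

lemma tau_vals: "map tau [1..<11] = [1,2,5,3,7,4,10,13,6,15]"
proof -
  have "tau 1 = 1" using tau_AA[of 1] A_vals by simp
  moreover have "tau 2 = 2" using tau_B[of 1] A_vals B_vals by simp
  moreover have "tau 3 = 5" using tau_AB[of 1] A_vals B_vals by simp
  moreover have "tau 4 = 3" using tau_AA[of 2] A_vals by simp
  moreover have "tau 5 = 7" using tau_B[of 2] A_vals B_vals by simp
  moreover have "tau 6 = 4" using tau_AA[of 3] A_vals by simp
  moreover have "tau 7 = 10" using tau_B[of 3] A_vals B_vals by simp
  moreover have "tau 8 = 13" using tau_AB[of 2] A_vals B_vals by simp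
  moreover have "tau 9 = 6" using tau_AA[of 4] A_vals by simp
  moreover have "tau 10 = 15" using tau_B[of 4] A_vals B_vals by simp
  ultimately show ?thesis by (simp add: upt_rec numeral_eq_Suc)
qed

theorem theorem4p5:
  shows "Rperm tau \<and> map tau [1..<11] = [1,2,5,3,7,4,10,13,6,15] \<and>
         Rperm tau_inv \<and>
         (\<forall>n\<ge>1. tau_inv (tau n) = n \<and> tau (tau_inv n) = n)"
  using Rperm_tau tau_vals Rperm_taui inv1 inv2 by blast

end
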